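(* For all nonnegative integers $i_1,\dots,i_n$ and $j_1,\dots,j_n$, $$e_{i_1,\dots,i_n}\le e_{i_1+j_1,\dots,i_n+j_n}\le e_{i_1,\dots,i_n}+e_{j_1,\dots,j_n},$$ and moreover $e_{i_1,\dots,i_n}\le 6\sqrt{i_1+\dots+i_n}$.
   Context: Let $(U_{\ell,r})_{\ell,r\ge1}$ be i.i.d. uniform random variables on $[0,1]$. For nonnegative integers $i_1,\dots,i_n$ let $\mathcal S_{i_1,\dots,i_n}=\bigcup_{\ell=1}^n\bigcup_{r=1}^{i_\ell}\{(U_{\ell,r},\ell)\}$ ($i_\ell$ uniform points on the horizontal line at height $\ell$), and $e_{i_1,\dots,i_n}=\mathbb E[\mathcal L_<(\mathcal S_{i_1,\dots,i_n})]$, where for a finite point set $\mathcal P$, $\mathcal L_<(\mathcal P)$ is the maximal length of a chain $P_1\prec\dots\prec P_L$ in $\mathcal P$, with $(a,b)\prec(a',b')$ iff $a<a'$ and $b<b'$. *)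

theory Defs
  imports "HOL-Probability.Probability"
begin

definition prec :: "real \<times> real \<Rightarrow> real \<times> real \<Rightarrow> bool" where
  "prec p q \<longleftrightarrow> fst p < fst q \<and> snd p < snd q"

definition chainLen :: "(real \<times> real) set \<Rightarrow> nat" where
  "chainLen P = Max {length xs | xs. set xs \<subseteq> P \<and> sorted_wrt prec xs}"

definition ptSet :: "nat \<Rightarrow> (nat \<Rightarrow> nat) \<Rightarrow> (nat \<times> nat \<Rightarrow> real) \<Rightarrow> (real \<times> real) set" where
  "ptSet n i u = {(u (l, r), real l) | l r. l \<in> {1..n} \<and> r \<in> {1..i l}}"

text \<open>Law of the i.i.d. family (U_{l,r}) of uniform variables on [0,1].\<close>
definition Umeas :: "(nat \<times> nat \<Rightarrow> real) measure" where
  "Umeas = PiM UNIV (\<lambda>_. uniform_measure lborel {0..1::real})"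

definition eL :: "nat \<Rightarrow> (nat \<Rightarrow> nat) \<Rightarrow> real" where
  "eL n i = (\<integral>u. real (chainLen (ptSet n i u)) \<partial>Umeas)"

end

theory Submission imports Defs "HOL-Combinatorics.Permutations" begin

lemma sw_distinct: "sorted_wrt prec xs \<Longrightarrow> distinct xs"
  by (induction xs) (auto simp: prec_def)

lemma sw_total: "sorted_wrt R xs \<Longrightarrow> x \<in> set xs \<Longrightarrow> y \<in> set xs \<Longrightarrow> x = y \<or> R x y \<or> R y x"
  by (induction xs) auto

lemma chainLen_facts:
  assumes P: "finite P"
  shows "set xs \<subseteq> P \<Longrightarrow> sorted_wrt prec xs \<Longrightarrow> length xs \<le> chainLen P"
    and "\<exists>xs. set xs \<subseteq> P \<and> sorted_wrt prec xs \<and> length xs = chainLen P"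
    and "chainLen P \<le> card P"
proof -
  define C where "C = {length xs | xs. set xs \<subseteq> P \<and> sorted_wrt prec xs}"
  have len: "length xs \<le> card P" if "set xs \<subseteq> P" "sorted_wrt prec xs" for xs
  proof -
    have "length xs = card (set xs)" using sw_distinct[OF that(2)] by (simp add: distinct_card)
    also have "\<dots> \<le> card P" using that P by (intro card_mono) auto
    finally show ?thesis .
  qed
  have Csub: "C \<subseteq> {0..card P}" using len unfolding C_def by auto
  hence fin: "finite C" by (rule finite_subset) simp
  have ne: "C \<noteq> {}" proof -
    have "0 \<in> C" unfolding C_def by (rule CollectI, rule exI[of _ "[]"]) simp
    then show ?thesis by blast
  qed
  have cl: "chainLen P = Max C" unfolding chainLen_def C_def ..
  show "length xs \<le> chainLen P" if "set xs \<subseteq> P" "sorted_wrt prec xs"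
    unfolding cl using that fin by (intro Max_ge) (auto simp: C_def)
  show "\<exists>xs. set xs \<subseteq> P \<and> sorted_wrt prec xs \<and> length xs = chainLen P"
    using Max_in[OF fin ne] unfolding cl C_def by auto
  show "chainLen P \<le> card P" using Max_in[OF fin ne] Csub unfolding cl by auto
qed

lemma chainLen_ge_iff:
  assumes "finite P"
  shows "k \<le> chainLen P \<longleftrightarrow> (\<exists>xs. set xs \<subseteq> P \<and> sorted_wrt prec xs \<and> length xs = k)"
proof
  assume "k \<le> chainLen P"
  obtain xs where xs: "set xs \<subseteq> P" "sorted_wrt prec xs" "length xs = chainLen P"
    using chainLen_facts(2)[OF assms] by blast
  show "\<exists>xs. set xs \<subseteq> P \<and> sorted_wrt prec xs \<and> length xs = k"
    using xs \<open>k \<le> chainLen P\<close>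
    by (intro exI[of _ "take k xs"]) (auto simp: sorted_wrt_take dest: in_set_takeD)
next
  assume "\<exists>xs. set xs \<subseteq> P \<and> sorted_wrt prec xs \<and> length xs = k"
  then show "k \<le> chainLen P" using chainLen_facts(1)[OF assms] by blast
qed

lemma chainLen_mono:
  assumes "finite Q" "P \<subseteq> Q" shows "chainLen P \<le> chainLen Q"
proof -
  have "finite P" using assms finite_subset by blast
  then obtain xs where xs: "set xs \<subseteq> P" "sorted_wrt prec xs" "length xs = chainLen P"
    using chainLen_facts(2) by blast
  then show ?thesis using chainLen_facts(1)[OF assms(1), of xs] assms(2) by auto
qed

lemma chainLen_union:
  assumes "finite A" "finite B" shows "chainLen (A \<union> B) \<le> chainLen A + chainLen B"
proof -
  obtain xs where xs: "set xs \<subseteq> A \<union> B" "sorted_wrt prec xs" "length xs = chainLen (A \<union> B)"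
    using chainLen_facts(2)[of "A \<union> B"] assms by blast
  have 1: "length (filter (\<lambda>x. x \<in> A) xs) \<le> chainLen A"
    using xs by (intro chainLen_facts(1)[OF assms(1)]) (auto simp: sorted_wrt_filter)
  have 2: "length (filter (\<lambda>x. x \<notin> A) xs) \<le> chainLen B"
    using xs by (intro chainLen_facts(1)[OF assms(2)]) (auto simp: sorted_wrt_filter)
  have "length xs = length (filter (\<lambda>x. x \<in> A) xs) + length (filter (\<lambda>x. x \<notin> A) xs)"
    by (simp add: sum_length_filter_compl)
  with 1 2 xs show ?thesis by linarith
qed

definition Iset :: "nat \<Rightarrow> (nat \<Rightarrow> nat) \<Rightarrow> (nat \<times> nat) set" where
  "Iset n i = Sigma {1..n} (\<lambda>l. {1..i l})"

definition Fev :: "(nat \<times> nat \<Rightarrow> real) \<Rightarrow> (nat \<times> nat) set \<Rightarrow> bool" where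
  "Fev u S \<longleftrightarrow> (\<forall>a\<in>S. \<forall>b\<in>S. fst a < fst b \<longrightarrow> u a < u b)"

lemma finite_Iset[simp]: "finite (Iset n i)" unfolding Iset_def by auto

lemma card_Iset: "card (Iset n i) = (\<Sum>l=1..n. i l)"
  unfolding Iset_def by (simp add: card_SigmaI)

lemma ptSet_eq: "ptSet n i u = (\<lambda>a. (u a, real (fst a))) ` Iset n i"
  unfolding ptSet_def Iset_def by force

lemma finite_ptSet[simp]: "finite (ptSet n i u)" unfolding ptSet_eq by simp

lemma chainLen_le_N: "chainLen (ptSet n i u) \<le> (\<Sum>l=1..n. i l)"
proof -
  have "chainLen (ptSet n i u) \<le> card (ptSet n i u)" by (rule chainLen_facts(3)) simp
  also have "\<dots> \<le> card (Iset n i)" unfolding ptSet_eq by (rule card_image_le) simp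
  finally show ?thesis by (simp add: card_Iset)
qed

lemma ge_iff:
  "k \<le> chainLen (ptSet n i u) \<longleftrightarrow>
     (\<exists>S. S \<subseteq> Iset n i \<and> card S = k \<and> inj_on fst S \<and> Fev u S)"
  (is "?L \<longleftrightarrow> ?R")
proof
  define \<phi> where "\<phi> = (\<lambda>a::nat\<times>nat. (u a, real (fst a)))"
  assume ?L
  then obtain xs where xs: "set xs \<subseteq> ptSet n i u" "sorted_wrt prec xs" "length xs = k"
    using chainLen_ge_iff[of "ptSet n i u"] by auto
  define idx where "idx p = (SOME a. a \<in> Iset n i \<and> p = \<phi> a)" for p
  have idx: "idx p \<in> Iset n i \<and> p = \<phi> (idx p)" if "p \<in> set xs" for p
  proof -
    have "\<exists>a. a \<in> Iset n i \<and> p = \<phi> a" using that xs(1) unfolding ptSet_eq \<phi>_def by blast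
    then show ?thesis unfolding idx_def by (rule someI_ex)
  qed
  have inj: "inj_on idx (set xs)" by (rule inj_onI) (metis idx)
  define S where "S = idx ` set xs"
  have "card S = k" unfolding S_def using card_image[OF inj] sw_distinct[OF xs(2)] xs(3)
    by (simp add: distinct_card)
  moreover have "S \<subseteq> Iset n i" unfolding S_def using idx by auto
  moreover have "inj_on fst S"
  proof (rule inj_onI)
    fix a b assume ab: "a \<in> S" "b \<in> S" "fst a = fst b"
    then obtain p q where pq: "p \<in> set xs" "q \<in> set xs" "a = idx p" "b = idx q" unfolding S_def by auto
    have "snd p = snd q" using idx[OF pq(1)] idx[OF pq(2)] pq ab(3) unfolding \<phi>_def by (metis snd_conv)
    hence "p = q" using sw_total[OF xs(2) pq(1,2)] by (auto simp: prec_def)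
    then show "a = b" using pq by simp
  qed
  moreover have "Fev u S" unfolding Fev_def
  proof (intro ballI impI)
    fix a b assume ab: "a \<in> S" "b \<in> S" "fst a < fst b"
    then obtain p q where pq: "p \<in> set xs" "q \<in> set xs" "a = idx p" "b = idx q" unfolding S_def by auto
    have pe: "p = (u a, real (fst a))" "q = (u b, real (fst b))"
      using idx[OF pq(1)] idx[OF pq(2)] pq by (simp_all add: \<phi>_def)
    have "snd p < snd q" using ab(3) pe by simp
    hence "prec p q" using sw_total[OF xs(2) pq(1,2)] by (auto simp: prec_def)
    then show "u a < u b" using pe by (simp add: prec_def)
  qed
  ultimately show ?R by blast
next
  assume ?R
  then obtain S where S: "S \<subseteq> Iset n i" "card S = k" "inj_on fst S" "Fev u S" by blast
  have finS: "finite S" by (rule finite_subset[OF S(1)]) simp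
  define g where "g = the_inv_into S fst"
  have g: "g l \<in> S \<and> fst (g l) = l" if "l \<in> fst ` S" for l
    using that S(3) unfolding g_def by (metis f_the_inv_into_f order_refl the_inv_into_into)
  define xs where "xs = map (\<lambda>l. (u (g l), real l)) (sorted_list_of_set (fst ` S))"
  have "length xs = k" unfolding xs_def using S(2,3) finS by (simp add: card_image)
  moreover have "set xs \<subseteq> ptSet n i u"
  proof
    fix p assume "p \<in> set xs"
    then obtain l where l: "l \<in> fst ` S" "p = (u (g l), real l)" unfolding xs_def using finS by auto
    then show "p \<in> ptSet n i u" unfolding ptSet_eq using g[OF l(1)] S(1) by force
  qed
  moreover have "sorted_wrt prec xs"
  proof -
    have "sorted_wrt (<) (sorted_list_of_set (fst ` S))" by simp
    then have "sorted_wrt (\<lambda>l l'. prec (u (g l), real l) (u (g l'), real l')) (sorted_list_of_set (fst ` S))"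
    proof (rule sorted_wrt_mono_rel[rotated])
      fix l l' assume ll: "l \<in> set (sorted_list_of_set (fst ` S))" "l' \<in> set (sorted_list_of_set (fst ` S))" "l < l'"
      hence "l \<in> fst ` S" "l' \<in> fst ` S" using finS by auto
      then show "prec (u (g l), real l) (u (g l'), real l')"
        using g S(4) ll(3) unfolding Fev_def prec_def by (metis fst_conv of_nat_less_iff snd_conv)
    qed
    then show ?thesis unfolding xs_def by (simp add: sorted_wrt_map)
  qed
  ultimately show ?L using chainLen_ge_iff[of "ptSet n i u"] by auto
qed


lemma cnt_eq:
  assumes finS: "finite S" and inj: "inj_on fst S" and rho: "\<rho> permutes S"
    and F: "Fev (u \<circ> \<rho>) S" and a: "a \<in> S"
  shows "card {c\<in>S. u c < u (\<rho> a)} = card {b\<in>S. fst b < fst a}"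
proof -
  have bij: "bij_betw \<rho> S S" using rho by (rule permutes_imp_bij)
  have "{c\<in>S. u c < u (\<rho> a)} = \<rho> ` {b\<in>S. u (\<rho> b) < u (\<rho> a)}"
  proof (intro set_eqI iffI)
    fix c assume c: "c \<in> {c\<in>S. u c < u (\<rho> a)}"
    have "\<rho> ` S = S" using bij by (simp add: bij_betw_def)
    then obtain b where "b \<in> S" "c = \<rho> b" using c by blast
    then show "c \<in> \<rho> ` {b\<in>S. u (\<rho> b) < u (\<rho> a)}" using c by auto
  next
    fix c assume "c \<in> \<rho> ` {b\<in>S. u (\<rho> b) < u (\<rho> a)}"
    then show "c \<in> {c\<in>S. u c < u (\<rho> a)}" using bij by (auto simp: bij_betw_def)
  qed
  also have "card \<dots> = card {b\<in>S. u (\<rho> b) < u (\<rho> a)}"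
    by (rule card_image) (use permutes_inj[OF rho] in \<open>auto simp: inj_on_def inj_def\<close>)
  also have "{b\<in>S. u (\<rho> b) < u (\<rho> a)} = {b\<in>S. fst b < fst a}"
  proof (intro set_eqI iffI)
    fix b assume "b \<in> {b\<in>S. fst b < fst a}"
    then show "b \<in> {b\<in>S. u (\<rho> b) < u (\<rho> a)}" using F a unfolding Fev_def by auto
  next
    fix b assume b: "b \<in> {b\<in>S. u (\<rho> b) < u (\<rho> a)}"
    have "\<not> fst a < fst b" using F a b unfolding Fev_def by force
    moreover have "fst a \<noteq> fst b" using inj a b by (auto simp: inj_on_def)
    ultimately show "b \<in> {b\<in>S. fst b < fst a}" using b by auto
  qed
  finally show ?thesis .
qed

lemma perm_unique:
  assumes finS: "finite S" and inj: "inj_on fst S" and s: "\<sigma> permutes S" and t: "\<tau> permutes S"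
    and Fs: "Fev (u \<circ> \<sigma>) S" and Ft: "Fev (u \<circ> \<tau>) S"
  shows "\<sigma> = \<tau>"
proof
  fix a show "\<sigma> a = \<tau> a"
  proof (cases "a \<in> S")
    case False then show ?thesis using s t by (simp add: permutes_not_in)
  next
    case a: True
    have ce: "card {c\<in>S. u c < u (\<sigma> a)} = card {c\<in>S. u c < u (\<tau> a)}"
      using cnt_eq[OF finS inj s Fs a] cnt_eq[OF finS inj t Ft a] by simp
    have sS: "\<sigma> a \<in> S" "\<tau> a \<in> S" using a s t by (auto simp: permutes_in_image)
    have strict: "card {c\<in>S. u c < x} < card {c\<in>S. u c < y}" if "x < y" "z \<in> S" "u z = x" for x y z
      by (rule psubset_card_mono) (use finS that in auto)
    have ue: "u (\<sigma> a) = u (\<tau> a)"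
    proof (rule ccontr)
      assume "u (\<sigma> a) \<noteq> u (\<tau> a)"
      then consider "u (\<sigma> a) < u (\<tau> a)" | "u (\<tau> a) < u (\<sigma> a)" by linarith
      then show False
      proof cases
        case 1 then show False using strict[OF 1 sS(1) refl] ce by simp
      next
        case 2 then show False using strict[OF 2 sS(2) refl] ce by simp
      qed
    qed
    obtain b where b: "b \<in> S" "\<sigma> b = \<tau> a"
      using sS(2) permutes_image[OF s] by (metis imageE)
    have "b = a"
    proof (rule ccontr)
      assume "b \<noteq> a"
      hence "fst b \<noteq> fst a" using inj a b(1) by (auto simp: inj_on_def)
      then consider "fst b < fst a" | "fst a < fst b" by linarith
      then show False using Fs a b ue unfolding Fev_def by cases force+
    qed
    then show ?thesis using b by simp
  qed
qed


abbreviation "M0 \<equiv> uniform_measure lborel {0..1::real}"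

lemma prob_M0: "prob_space M0"
  by (rule prob_space_uniform_measure) auto

lemma prob_U: "prob_space Umeas"
  unfolding Umeas_def by (rule prob_space_PiM) (rule prob_M0)

lemma space_U: "space Umeas = UNIV"
  unfolding Umeas_def by (simp add: space_PiM)

lemma meas_comp: "(\<lambda>u. u \<circ> f) \<in> Umeas \<rightarrow>\<^sub>M Umeas"
  unfolding Umeas_def comp_def
  by (rule measurable_PiM_single') (auto simp: space_PiM intro: measurable_component_singleton)

lemma distr_comp:
  assumes "inj f"
  shows "distr Umeas Umeas (\<lambda>u. u \<circ> f) = Umeas"
proof -
  have "distr (PiM UNIV (\<lambda>_. M0)) (PiM UNIV (\<lambda>i. (\<lambda>_. M0) (f i))) (\<lambda>\<omega>. \<lambda>n\<in>UNIV. \<omega> (f n))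
     = PiM UNIV (\<lambda>i. (\<lambda>_. M0) (f i))"
    by (rule distr_PiM_reindex) (use assms prob_M0 in auto)
  then show ?thesis unfolding Umeas_def comp_def by (simp add: restrict_def)
qed

lemma pred_Fev: "Measurable.pred Umeas (\<lambda>u. Fev u S)"
  unfolding Fev_def Umeas_def by measurable

lemma sets_Fev[measurable]: "{u. Fev u S} \<in> sets Umeas"
  using pred_Fev[of S] by (simp add: pred_def space_U)

lemma Fev_bound:
  assumes finS: "finite S" and k: "card S = k" and inj: "inj_on fst S"
  shows "measure Umeas {u. Fev u S} \<le> 1 / fact k"
proof -
  interpret prob_space Umeas by (rule prob_U)
  define P where "P = {\<sigma>. \<sigma> permutes S}"
  define E where "E \<sigma> = {u. Fev (u \<circ> \<sigma>) S}" for \<sigma> :: "nat \<times> nat \<Rightarrow> nat \<times> nat"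
  have finP: "finite P" unfolding P_def using finS by (rule finite_permutations)
  have cardP: "card P = fact k" unfolding P_def using card_permutations[OF k finS] .
  have Eeq: "E \<sigma> = (\<lambda>u. u \<circ> \<sigma>) -` {u. Fev u S} \<inter> space Umeas" for \<sigma> :: "nat \<times> nat \<Rightarrow> nat \<times> nat"
    unfolding E_def space_U by auto
  have Esets: "E \<sigma> \<in> sets Umeas" for \<sigma>
    unfolding Eeq by (rule measurable_sets[OF meas_comp sets_Fev])
  have mE: "measure Umeas (E \<sigma>) = measure Umeas {u. Fev u S}" if "\<sigma> \<in> P" for \<sigma>
  proof -
    have "inj \<sigma>" using that unfolding P_def by (auto intro: permutes_inj)
    have "measure Umeas {u. Fev u S} = measure (distr Umeas Umeas (\<lambda>u. u \<circ> \<sigma>)) {u. Fev u S}"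
      using distr_comp[OF \<open>inj \<sigma>\<close>] by simp
    also have "\<dots> = measure Umeas (E \<sigma>)"
      unfolding Eeq by (rule measure_distr[OF meas_comp sets_Fev])
    finally show ?thesis by simp
  qed
  have disj: "disjoint_family_on E P"
    unfolding disjoint_family_on_def
  proof (intro ballI impI)
    fix \<sigma> \<tau> assume st: "\<sigma> \<in> P" "\<tau> \<in> P" "\<sigma> \<noteq> \<tau>"
    show "E \<sigma> \<inter> E \<tau> = {}"
      using perm_unique[OF finS inj, of \<sigma> \<tau>] st unfolding E_def P_def by auto
  qed
  have "measure Umeas (\<Union>\<sigma>\<in>P. E \<sigma>) = (\<Sum>\<sigma>\<in>P. measure Umeas (E \<sigma>))"
    by (rule measure_finite_Union[OF finP]) (use Esets disj in auto)
  also have "\<dots> = (\<Sum>\<sigma>\<in>P. measure Umeas {u. Fev u S})" by (rule sum.cong) (auto simp: mE)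
  also have "\<dots> = fact k * measure Umeas {u. Fev u S}" using cardP by simp
  finally have "fact k * measure Umeas {u. Fev u S} \<le> 1"
    using prob_le_1[of "\<Union>\<sigma>\<in>P. E \<sigma>"] by simp
  then show ?thesis by (simp add: field_simps)
qed

definition Sk :: "nat \<Rightarrow> (nat \<Rightarrow> nat) \<Rightarrow> nat \<Rightarrow> (nat \<times> nat) set set" where
  "Sk n i k = {S. S \<subseteq> Iset n i \<and> card S = k \<and> inj_on fst S}"

lemma finite_Sk: "finite (Sk n i k)"
  by (rule finite_subset[of _ "Pow (Iset n i)"]) (auto simp: Sk_def)

lemma Ak_eq: "{u. k \<le> chainLen (ptSet n i u)} = (\<Union>S\<in>Sk n i k. {u. Fev u S})"
  using ge_iff[of k n i] unfolding Sk_def by blast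

lemma sets_Ak[measurable]: "{u. k \<le> chainLen (ptSet n i u)} \<in> sets Umeas"
  unfolding Ak_eq by (rule sets.finite_UN[OF finite_Sk]) simp

lemma L_sum: "real (chainLen (ptSet n i u)) =
   (\<Sum>k=1..(\<Sum>l=1..n. i l). indicator {u. k \<le> chainLen (ptSet n i u)} u)"
proof -
  define L where "L = chainLen (ptSet n i u)"
  define N where "N = (\<Sum>l=1..n. i l)"
  have LN: "L \<le> N" unfolding L_def N_def by (rule chainLen_le_N)
  have "(\<Sum>k=1..N. indicator {u. k \<le> chainLen (ptSet n i u)} u) = (\<Sum>k=1..N. if k \<le> L then 1 else (0::real))"
    by (rule sum.cong) (auto simp: L_def indicator_def)
  also have "\<dots> = real (card ({1..N} \<inter> {k. k \<le> L}))"
    by (simp add: sum.If_cases)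
  also have "{1..N} \<inter> {k. k \<le> L} = {1..L}" using LN by auto
  finally show ?thesis by (simp add: L_def N_def)
qed

lemma eL_eq: "eL n i = (\<Sum>k=1..(\<Sum>l=1..n. i l). measure Umeas {u. k \<le> chainLen (ptSet n i u)})"
  and integrable_L: "integrable Umeas (\<lambda>u. real (chainLen (ptSet n i u)))"
proof -
  interpret prob_space Umeas by (rule prob_U)
  have ii: "integrable Umeas (indicator {u. k \<le> chainLen (ptSet n i u)} :: _ \<Rightarrow> real)" for k
    by (rule integrable_real_indicator) (auto simp: less_top[symmetric])
  show "integrable Umeas (\<lambda>u. real (chainLen (ptSet n i u)))"
    by (subst L_sum) (intro Bochner_Integration.integrable_sum ii)
  have "eL n i = (\<integral>u. (\<Sum>k=1..(\<Sum>l=1..n. i l). indicator {u. k \<le> chainLen (ptSet n i u)} u) \<partial>Umeas)"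
    unfolding eL_def by (subst L_sum) rule
  also have "\<dots> = (\<Sum>k=1..(\<Sum>l=1..n. i l). (\<integral>u. indicator {u. k \<le> chainLen (ptSet n i u)} u \<partial>Umeas))"
    by (rule Bochner_Integration.integral_sum) (rule ii)
  also have "\<dots> = (\<Sum>k=1..(\<Sum>l=1..n. i l). measure Umeas {u. k \<le> chainLen (ptSet n i u)})"
    by (rule sum.cong) (auto intro: integral_indicator)
  finally show "eL n i = (\<Sum>k=1..(\<Sum>l=1..n. i l). measure Umeas {u. k \<le> chainLen (ptSet n i u)})" .
qed

lemma Ak_bound:
  "measure Umeas {u. k \<le> chainLen (ptSet n i u)} \<le> min 1 (real ((\<Sum>l=1..n. i l) choose k) / fact k)"
proof -
  interpret prob_space Umeas by (rule prob_U)
  have "measure Umeas {u. k \<le> chainLen (ptSet n i u)} \<le> (\<Sum>S\<in>Sk n i k. measure Umeas {u. Fev u S})"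
    unfolding Ak_eq by (rule measure_UNION_le[OF finite_Sk]) simp
  also have "\<dots> \<le> (\<Sum>S\<in>Sk n i k. 1 / fact k)"
  proof (rule sum_mono)
    fix S assume "S \<in> Sk n i k"
    then show "measure Umeas {u. Fev u S} \<le> 1 / fact k" unfolding Sk_def
      by (intro Fev_bound) (auto intro: finite_subset[of _ "Iset n i"])
  qed
  also have "\<dots> = real (card (Sk n i k)) / fact k" by simp
  also have "\<dots> \<le> real (card {S. S \<subseteq> Iset n i \<and> card S = k}) / fact k"
    by (intro divide_right_mono of_nat_mono card_mono) (auto simp: Sk_def intro: finite_subset[of _ "Pow (Iset n i)"])
  also have "\<dots> = real ((\<Sum>l=1..n. i l) choose k) / fact k"
    by (simp add: n_subsets card_Iset)
  finally show ?thesis using prob_le_1 by simp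
qed

lemma fact_lower: "(real k / 3) ^ k \<le> fact k"
proof (induction k)
  case 0 then show ?case by simp
next
  case (Suc k)
  show ?case
  proof (cases "k = 0")
    case True then show ?thesis by simp
  next
    case False
    have kpos: "real k > 0" using False by simp
    have "(1 + 1 / real k) ^ k \<le> exp (1 / real k) ^ k"
      by (intro power_mono) (use exp_ge_add_one_self[of "1/real k"] in auto)
    also have "\<dots> = exp (real k * (1 / real k))" by (rule exp_of_nat_mult[symmetric])
    also have "\<dots> = exp 1" using kpos by simp
    also have "\<dots> \<le> 3" by (rule exp_le)
    finally have A: "(1 + 1 / real k) ^ k \<le> 3" .
    have "(real (Suc k) / 3) ^ k = (real k / 3) ^ k * (1 + 1 / real k) ^ k"
    proof -
      have "real (Suc k) / 3 = (real k / 3) * (1 + 1 / real k)" using kpos by (simp add: field_simps)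
      then show ?thesis by (simp only: power_mult_distrib)
    qed
    also have "\<dots> \<le> (real k / 3) ^ k * 3"
      using A by (intro mult_left_mono) auto
    also have "\<dots> \<le> fact k * 3" using Suc.IH by simp
    finally have B: "(real (Suc k) / 3) ^ k \<le> fact k * 3" .
    have "(real (Suc k) / 3) ^ Suc k = (real (Suc k) / 3) * (real (Suc k) / 3) ^ k" by simp
    also have "\<dots> \<le> (real (Suc k) / 3) * (fact k * 3)"
      using B by (intro mult_left_mono) auto
    also have "\<dots> = fact (Suc k)" by (simp add: fact_Suc)
    finally show ?thesis .
  qed
qed

lemma term_bound:
  assumes "k \<ge> 1" "18 * real N \<le> real k ^ 2"
  shows "real (N choose k) / fact k \<le> (1/2) ^ k"
proof -
  have kpos: "real k > 0" using assms by simp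
  have f0: "(0::real) < fact k" by simp
  have "real (N choose k) * fact k \<le> real N ^ k"
  proof -
    have "real ((N choose k) * fact k) \<le> real (N ^ k)"
      by (simp only: of_nat_le_iff) (rule binomial_fact_pow)
    then show ?thesis by (simp only: of_nat_mult of_nat_fact of_nat_power)
  qed
  hence "real (N choose k) / fact k \<le> real N ^ k / (fact k * fact k)"
    using f0 by (simp add: field_simps)
  also have "\<dots> \<le> real N ^ k / ((real k / 3) ^ k * (real k / 3) ^ k)"
    using kpos fact_lower[of k]
    by (intro divide_left_mono mult_mono) auto
  also have "\<dots> = (9 * real N / real k ^ 2) ^ k"
  proof -
    have "(real k / 3) ^ k * (real k / 3) ^ k = (real k ^ 2 / 9) ^ k"
      by (simp only: power_mult_distrib[symmetric]) (simp add: power2_eq_square)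
    moreover have "real N / (real k ^ 2 / 9) = 9 * real N / real k ^ 2" by simp
    ultimately show ?thesis by (simp only: power_divide[symmetric])
  qed
  also have "\<dots> \<le> (1/2) ^ k"
  proof (rule power_mono)
    have "0 < real k ^ 2" using kpos by simp
    then show "9 * real N / real k ^ 2 \<le> 1/2" using assms(2) by (simp add: divide_le_eq)
  qed simp
  finally show ?thesis .
qed

lemma sum_bound:
  "(\<Sum>k=1..N. min 1 (real (N choose k) / fact k)) \<le> 6 * sqrt (real N)"
proof (cases "N = 0")
  case True then show ?thesis by simp
next
  case False
  define s where "s = sqrt (18 * real N)"
  define A where "A = {k\<in>{1..N}. real k ^ 2 < 18 * real N}"
  define B where "B = {k\<in>{1..N}. \<not> real k ^ 2 < 18 * real N}"
  have AB: "{1..N} = A \<union> B" "A \<inter> B = {}" unfolding A_def B_def by auto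
  have "(\<Sum>k=1..N. min 1 (real (N choose k) / fact k))
     = (\<Sum>k\<in>A. min 1 (real (N choose k) / fact k)) + (\<Sum>k\<in>B. min 1 (real (N choose k) / fact k))"
    unfolding AB(1) by (rule sum.union_disjoint) (use AB in \<open>auto simp: A_def B_def\<close>)
  also have "(\<Sum>k\<in>A. min 1 (real (N choose k) / fact k)) \<le> (\<Sum>k\<in>A. 1)"
    by (intro sum_mono) auto
  also have "(\<Sum>k\<in>B. min 1 (real (N choose k) / fact k)) \<le> (\<Sum>k\<in>B. (1/2)^k)"
    by (intro sum_mono) (auto simp: B_def intro!: min.coboundedI2 term_bound)
  also have "(\<Sum>k\<in>B. (1/2::real)^k) \<le> (\<Sum>k<Suc N. (1/2::real)^k) - 1"
  proof -
    have "B \<subseteq> {..<Suc N} - {0}" unfolding B_def by auto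
    hence "(\<Sum>k\<in>B. (1/2::real)^k) \<le> (\<Sum>k\<in>{..<Suc N} - {0}. (1/2::real)^k)"
      by (intro sum_mono2) auto
    also have "\<dots> = (\<Sum>k<Suc N. (1/2::real)^k) - 1"
      by (subst sum_diff1) auto
    finally show ?thesis .
  qed
  also have "(\<Sum>k<Suc N. (1/2::real)^k) \<le> 2"
  proof -
    have e: "(\<Sum>k<Suc N. (1/2::real)^k) = 2 - 2*(1/2)^Suc N"
      by (induction N) simp_all
    have "0 \<le> (1/2::real)^Suc N" by simp
    then show ?thesis using e by linarith
  qed
  also have "(\<Sum>k\<in>A. (1::real)) \<le> s"
  proof -
    have "A \<subseteq> {1..nat (floor s)}"
    proof
      fix k assume "k \<in> A"
      hence "real k ^ 2 < 18 * real N" "k \<ge> 1" by (auto simp: A_def)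
      hence "real k < s" unfolding s_def by (simp add: real_less_rsqrt)
      hence "int k \<le> floor s" by (simp add: le_floor_iff)
      then show "k \<in> {1..nat (floor s)}" using \<open>k\<ge>1\<close> by auto
    qed
    hence "card A \<le> nat (floor s)" by (metis card_atLeastAtMost card_mono finite_atLeastAtMost diff_Suc_1)
    moreover have "s \<ge> 0" unfolding s_def by simp
    ultimately show ?thesis by simp linarith
  qed
  finally have "(\<Sum>k=1..N. min 1 (real (N choose k) / fact k)) \<le> s + 1" by simp
  also have "s + 1 \<le> 6 * sqrt (real N)"
  proof -
    have "s = sqrt 18 * sqrt (real N)" unfolding s_def by (simp add: real_sqrt_mult)
    moreover have "sqrt 18 \<le> (5::real)" by (simp add: real_sqrt_le_iff real_le_lsqrt)
    moreover have "sqrt (real N) \<ge> 1" using False by simp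
    ultimately show ?thesis using mult_right_mono[of "sqrt 18" 5 "sqrt (real N)"] by linarith
  qed
  finally show ?thesis .
qed

lemma ptSet_mono: "ptSet n i u \<subseteq> ptSet n (\<lambda>l. i l + j l) u"
  unfolding ptSet_eq Iset_def by (intro image_mono Sigma_mono) auto

lemma ptSet_split:
  "ptSet n (\<lambda>l. i l + j l) u \<subseteq> ptSet n i u \<union> ptSet n j (u \<circ> (\<lambda>(l, r). (l, r + i l)))"
proof
  fix p assume "p \<in> ptSet n (\<lambda>l. i l + j l) u"
  then obtain a where a: "a \<in> Iset n (\<lambda>l. i l + j l)" "p = (u a, real (fst a))"
    unfolding ptSet_eq by blast
  obtain l r where lr: "a = (l, r)" by (cases a)
  have l: "l \<in> {1..n}" "r \<in> {1..i l + j l}" using a(1) lr unfolding Iset_def by auto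
  show "p \<in> ptSet n i u \<union> ptSet n j (u \<circ> (\<lambda>(l, r). (l, r + i l)))"
  proof (cases "r \<le> i l")
    case True
    then have "(l, r) \<in> Iset n i" using l unfolding Iset_def by simp
    moreover have "p = (\<lambda>a. (u a, real (fst a))) (l, r)" using a(2) lr by simp
    ultimately have "p \<in> ptSet n i u" unfolding ptSet_eq by (rule image_eqI[rotated])
    then show ?thesis by (rule UnI1)
  next
    case False
    then have "(l, r - i l) \<in> Iset n j" using l unfolding Iset_def by auto
    moreover have "p = (\<lambda>a. ((u \<circ> (\<lambda>(l, r). (l, r + i l))) a, real (fst a))) (l, r - i l)"
      using a(2) lr False by simp
    ultimately have "p \<in> ptSet n j (u \<circ> (\<lambda>(l, r). (l, r + i l)))" unfolding ptSet_eq by (rule image_eqI[rotated])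
    then show ?thesis by (rule UnI2)
  qed
qed

theorem mainTheorem8:
  fixes n :: nat and i j :: "nat \<Rightarrow> nat"
  shows "eL n i \<le> eL n (\<lambda>l. i l + j l)
       \<and> eL n (\<lambda>l. i l + j l) \<le> eL n i + eL n j
       \<and> eL n i \<le> 6 * sqrt (real (\<Sum>l=1..n. i l))"
proof (intro conjI)
  show "eL n i \<le> eL n (\<lambda>l. i l + j l)"
    unfolding eL_def
    by (intro integral_mono integrable_L of_nat_mono chainLen_mono ptSet_mono finite_ptSet)
next
  define g where "g = (\<lambda>(l, r). (l, r + i l))"
  have ginj: "inj g" unfolding g_def by (auto simp: inj_def)
  have bm: "(\<lambda>u. real (chainLen (ptSet n j u))) \<in> borel_measurable Umeas"
    using integrable_L by (rule borel_measurable_integrable)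
  have int2: "integrable Umeas (\<lambda>u. real (chainLen (ptSet n j (u \<circ> g))))"
  proof -
    have "integrable (distr Umeas Umeas (\<lambda>u. u \<circ> g)) (\<lambda>u. real (chainLen (ptSet n j u)))"
      using distr_comp[OF ginj] integrable_L by simp
    then show ?thesis using integrable_distr_eq[OF meas_comp bm] by simp
  qed
  have "eL n (\<lambda>l. i l + j l) \<le> (\<integral>u. real (chainLen (ptSet n i u)) + real (chainLen (ptSet n j (u \<circ> g))) \<partial>Umeas)"
    unfolding eL_def
  proof (rule integral_mono)
    show "integrable Umeas (\<lambda>u. real (chainLen (ptSet n (\<lambda>l. i l + j l) u)))" by (rule integrable_L)
    show "integrable Umeas (\<lambda>u. real (chainLen (ptSet n i u)) + real (chainLen (ptSet n j (u \<circ> g))))"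
      using integrable_L int2 by (rule Bochner_Integration.integrable_add)
    fix u
    have "chainLen (ptSet n (\<lambda>l. i l + j l) u) \<le> chainLen (ptSet n i u \<union> ptSet n j (u \<circ> g))"
      using ptSet_split[of n i j u] unfolding g_def by (intro chainLen_mono) auto
    also have "\<dots> \<le> chainLen (ptSet n i u) + chainLen (ptSet n j (u \<circ> g))"
      by (rule chainLen_union) auto
    finally show "real (chainLen (ptSet n (\<lambda>l. i l + j l) u)) \<le> real (chainLen (ptSet n i u)) + real (chainLen (ptSet n j (u \<circ> g)))"
      by linarith
  qed
  also have "\<dots> = eL n i + (\<integral>u. real (chainLen (ptSet n j (u \<circ> g))) \<partial>Umeas)"
    unfolding eL_def using integrable_L int2 by (rule Bochner_Integration.integral_add)
  also have "(\<integral>u. real (chainLen (ptSet n j (u \<circ> g))) \<partial>Umeas) = eL n j"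
  proof -
    have "(\<integral>u. real (chainLen (ptSet n j (u \<circ> g))) \<partial>Umeas)
        = (\<integral>u. real (chainLen (ptSet n j u)) \<partial>distr Umeas Umeas (\<lambda>u. u \<circ> g))"
      by (rule integral_distr[OF meas_comp bm, symmetric])
    then show ?thesis unfolding eL_def using distr_comp[OF ginj] by simp
  qed
  finally show "eL n (\<lambda>l. i l + j l) \<le> eL n i + eL n j" .
next
  have "eL n i \<le> (\<Sum>k=1..(\<Sum>l=1..n. i l). min 1 (real ((\<Sum>l=1..n. i l) choose k) / fact k))"
    unfolding eL_eq by (rule sum_mono) (rule Ak_bound)
  also have "\<dots> \<le> 6 * sqrt (real (\<Sum>l=1..n. i l))" by (rule sum_bound)
  finally show "eL n i \<le> 6 * sqrt (real (\<Sum>l=1..n. i l))" .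
qed

end
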